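(* Let $y_0\in\mathbb{R}$, $b>0$, $\epsilon>0$, and let $f:[y_0,\infty)\to\mathbb{R}$ be such that $p:=1/f$ is well defined and twice differentiable on $[y_0,\infty)$, with $f(y_0)>0$, $f'(y)>0$ and $p''(y)>0$ for all $y\ge y_0$. Assume $b<\int_{y_0}^{\infty}p(y)\,dy$ (possibly $+\infty$). For $h>0$ and integers $N\ge0$ define $$\Sigma_{l,h,N}=\sum_{i=1}^{N}h\,p(y_0+hi),\qquad \Sigma_{t,h,N}=\sum_{i=1}^{N}\frac h2\big(p(y_0+hi)+p(y_0+h(i-1))\big),$$ and set $\Sigma_{t,h,N}=0$ for integers $N<0$. For each positive integer $j$ let $h^{(j)}=\epsilon/j$ and let $n_2^{(j)}$ be the smallest positive integer $N$ with $\Sigma_{l,h^{(j)},N}\ge b$; assume $n_2^{(1)}$ exists. Consider Algorithm 1: for $j=1,2,3,\dots$, compute $n_2^{(j)}$ and stop as soon as $\Sigma_{t,h^{(j)},\,n_2^{(j)}-j}\le b$. Then Algorithm 1 stops after finitely many iterations, i.e. there exists a positive integer $j$ with $\Sigma_{t,h^{(j)},\,n_2^{(j)}-j}\le b$.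
   Context: $\Sigma_{l,h,N}$ and $\Sigma_{t,h,N}$ are the lower rectangular and trapezoidal sums with step $h$ for $\int_{y_0}^{y_0+hN}p(y)\,dy$ (empty sums are $0$). When Algorithm 1 stops at iteration $j$, it outputs an approximation such as $y_0+h^{(j)}n_2^{(j)}$ to the number $Y$ defined by $\int_{y_0}^{Y}p(y)\,dy=b$ (the value at $x=b$ of the solution of $y'=f(y)$, $y(0)=y_0$). *)

theory Defs
  imports "HOL-Analysis.Analysis"
begin

definition sigma_l :: "(real \<Rightarrow> real) \<Rightarrow> real \<Rightarrow> real \<Rightarrow> nat \<Rightarrow> real" where
  "sigma_l p y0 h N = (\<Sum>i=1..N. h * p (y0 + h * real i))"

definition sigma_t :: "(real \<Rightarrow> real) \<Rightarrow> real \<Rightarrow> real \<Rightarrow> int \<Rightarrow> real" where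
  "sigma_t p y0 h N = (if N < 0 then 0 else
     (\<Sum>i=1..nat N. h / 2 * (p (y0 + h * real i) + p (y0 + h * (real i - 1)))))"

definition n2 :: "(real \<Rightarrow> real) \<Rightarrow> real \<Rightarrow> real \<Rightarrow> real \<Rightarrow> nat" where
  "n2 p y0 h b = (LEAST N. N > 0 \<and> sigma_l p y0 h N \<ge> b)"

end

theory Submission
  imports Defs
begin

lemma mono_f:
  fixes f f' :: "real \<Rightarrow> real"
  assumes d: "\<forall>y\<ge>y0. (f has_real_derivative f' y) (at y within {y0..}) \<and> f' y > 0"
    and ab: "y0 \<le> a" "a \<le> b"
  shows "f a \<le> f b"
proof -
  have cont: "continuous_on {y0..} f"
    using d by (metis DERIV_continuous atLeast_iff continuous_on_eq_continuous_within)
  show ?thesis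
  proof (rule DERIV_nonneg_imp_increasing_open[OF ab(2)])
    fix x assume x: "a < x" "x < b"
    have "x \<in> interior {y0..}" using x ab by simp
    then have "at x within {y0..} = at x" by (rule at_within_interior)
    then show "\<exists>y. DERIV f x :> y \<and> y \<ge> 0" using d x ab
      by (metis less_eq_real_def order.trans)
  next
    show "continuous_on {a..b} f" using cont ab
      by (elim continuous_on_subset) auto
  qed
qed

lemma telescope:
  fixes q :: "nat \<Rightarrow> real"
  shows "(\<Sum>i=1..N. h/2 * (q i + q (i-1))) = (\<Sum>i=1..N. h * q i) + h/2 * (q 0 - q N)"
  by (induction N) (auto simp: field_simps)

theorem theorem1:
  fixes f f' p' p'' :: "real \<Rightarrow> real" and y0 b \<epsilon> :: real
  assumes b_pos: "b > 0" and eps_pos: "\<epsilon> > 0"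
    and f_nz: "\<forall>y\<ge>y0. f y \<noteq> 0"
    and f_y0: "f y0 > 0"
    and f_deriv: "\<forall>y\<ge>y0. (f has_real_derivative f' y) (at y within {y0..}) \<and> f' y > 0"
    and p_deriv: "\<forall>y\<ge>y0. ((\<lambda>t. 1 / f t) has_real_derivative p' y) (at y within {y0..})"
    and p'_deriv: "\<forall>y\<ge>y0. (p' has_real_derivative p'' y) (at y within {y0..}) \<and> p'' y > 0"
    and b_lt_int: "\<exists>T\<ge>y0. (\<lambda>t. 1 / f t) integrable_on {y0..T} \<and> b < integral {y0..T} (\<lambda>t. 1 / f t)"
    and n2_1_exists: "\<exists>N::nat. N > 0 \<and> sigma_l (\<lambda>t. 1 / f t) y0 \<epsilon> N \<ge> b"
  shows "\<exists>j::nat. j > 0 \<and>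
           (\<exists>N::nat. N > 0 \<and> sigma_l (\<lambda>t. 1 / f t) y0 (\<epsilon> / real j) N \<ge> b) \<and>
           sigma_t (\<lambda>t. 1 / f t) y0 (\<epsilon> / real j)
             (int (n2 (\<lambda>t. 1 / f t) y0 (\<epsilon> / real j) b) - int j) \<le> b"
proof -
  define p where "p = (\<lambda>t. 1 / f t)"
  have fpos: "f y > 0" if "y \<ge> y0" for y
    using mono_f[OF f_deriv order.refl that] f_y0 by linarith
  have ppos: "p y > 0" if "y \<ge> y0" for y using fpos[OF that] by (simp add: p_def)
  have pmono: "p y \<le> p x" if "y0 \<le> x" "x \<le> y" for x y
    using mono_f[OF f_deriv that] fpos[OF that(1)] by (simp add: p_def frac_le)
  obtain M :: nat where M: "M > 0" "sigma_l p y0 \<epsilon> M \<ge> b"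
    using n2_1_exists p_def by auto
  define Z where "Z = y0 + \<epsilon> * real M"
  have Z: "Z \<ge> y0" using eps_pos by (simp add: Z_def)
  define c where "c = p Z"
  have c: "c > 0" using ppos[OF Z] by (simp add: c_def)
  define P0 where "P0 = p y0"
  obtain j :: nat where j: "real j \<ge> 2 + P0 / (2*c)" using real_arch_simple by blast
  have "P0 / (2*c) \<ge> 0" using c ppos[of y0] by (simp add: P0_def)
  then have jpos: "j > 0" using j by (cases j) auto
  define h where "h = \<epsilon> / real j"
  have hpos: "h > 0" using eps_pos jpos by (simp add: h_def)
  have blk: "sigma_l p y0 h (j * K) \<ge> sigma_l p y0 \<epsilon> K" for K
  proof (induction K)
    case 0 then show ?case by (simp add: sigma_l_def)
  next
    case (Suc K)
    have split: "{1..j * Suc K} = {1..j*K} \<union> {j*K+1..j*K+j}" by auto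
    have "sigma_l p y0 h (j * Suc K) = sigma_l p y0 h (j*K) + (\<Sum>i=j*K+1..j*K+j. h * p (y0 + h * real i))"
      unfolding sigma_l_def split by (subst sum.union_disjoint) auto
    moreover have "(\<Sum>i=j*K+1..j*K+j. h * p (y0 + h * real i)) \<ge> (\<Sum>i=j*K+1..j*K+j. h * p (y0 + \<epsilon> * real (Suc K)))"
    proof (rule sum_mono)
      fix i assume i: "i \<in> {j*K+1..j*K+j}"
      have "h * real i \<le> \<epsilon> * real (Suc K)"
      proof -
        have "real i \<le> real j * real (Suc K)" using i by (simp add: algebra_simps) (metis of_nat_le_iff of_nat_mult of_nat_add mult.commute)
        then have "h * real i \<le> h * (real j * real (Suc K))" using hpos by simp
        also have "\<dots> = \<epsilon> * real (Suc K)" using jpos by (simp add: h_def)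
        finally show ?thesis .
      qed
      moreover have "0 \<le> h * real i" using hpos by simp
      ultimately show "h * p (y0 + \<epsilon> * real (Suc K)) \<le> h * p (y0 + h * real i)"
        using pmono[of "y0 + h * real i" "y0 + \<epsilon> * real (Suc K)"] hpos by simp
    qed
    moreover have "(\<Sum>i=j*K+1..j*K+j. h * p (y0 + \<epsilon> * real (Suc K))) = \<epsilon> * p (y0 + \<epsilon> * real (Suc K))"
      using jpos by (simp add: h_def)
    moreover have "sigma_l p y0 \<epsilon> (Suc K) = sigma_l p y0 \<epsilon> K + \<epsilon> * p (y0 + \<epsilon> * real (Suc K))"
      by (simp add: sigma_l_def)
    ultimately show ?case using Suc.IH by linarith
  qed
  have ex: "\<exists>N::nat. N > 0 \<and> sigma_l p y0 h N \<ge> b"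
    using blk[of M] M jpos by (intro exI[of _ "j*M"]) auto
  define n where "n = n2 p y0 h b"
  have n: "n > 0" "sigma_l p y0 h n \<ge> b"
    using LeastI_ex[OF ex] by (auto simp: n_def n2_def)
  have nle: "n \<le> j * M"
    unfolding n_def n2_def using blk[of M] M jpos by (intro Least_le) auto
  have nprev: "sigma_l p y0 h (n - 1) < b"
  proof (cases "n = 1")
    case True then show ?thesis using b_pos by (simp add: sigma_l_def)
  next
    case False
    then have "n - 1 > 0" "n - 1 < n" using n by auto
    then show ?thesis using not_less_Least[of "n-1" "\<lambda>N. N > 0 \<and> sigma_l p y0 h N \<ge> b"]
      by (auto simp: n_def n2_def)
  qed
  have hn: "y0 + h * real n \<le> Z"
  proof -
    have "h * real n \<le> h * (real j * real M)" using nle hpos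
      by (metis mult_left_mono less_imp_le of_nat_le_iff of_nat_mult)
    also have "\<dots> = \<epsilon> * real M" using jpos by (simp add: h_def)
    finally show ?thesis by (simp add: Z_def)
  qed
  have main: "sigma_t p y0 h (int n - int j) \<le> b"
  proof (cases "int n - int j < 0")
    case True then show ?thesis using b_pos by (simp add: sigma_t_def)
  next
    case False
    define N where "N = n - j"
    have NN: "nat (int n - int j) = N" "j \<le> n" using False by (auto simp: N_def)
    define q where "q i = p (y0 + h * real i)" for i
    have st: "sigma_t p y0 h (int n - int j) = (\<Sum>i=1..N. h/2 * (q i + q (i-1)))"
      unfolding sigma_t_def using False NN
      by (auto simp: q_def of_nat_diff intro!: sum.cong)
    have sl: "sigma_l p y0 h K = (\<Sum>i=1..K. h * q i)" for K by (simp add: sigma_l_def q_def)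
    have qle: "q i \<le> P0" for i unfolding q_def P0_def using hpos by (intro pmono) auto
    have qge: "q i \<ge> c" if "i \<le> n" for i
    proof -
      have "h * real i \<le> h * real n" using that hpos by simp
      moreover have "0 \<le> h * real i" using hpos by simp
      ultimately show ?thesis unfolding q_def c_def using hn by (intro pmono) linarith+
    qed
    have q0: "q N > 0" unfolding q_def using hpos by (intro ppos) auto
    have t1: "sigma_t p y0 h (int n - int j) \<le> sigma_l p y0 h N + h/2 * P0"
      using st telescope[of h q N] sl[of N] qle[of 0] q0 hpos
      by (simp add: q_def)
    have split: "{1..n-1} = {1..N} \<union> {N+1..n-1}" using NN jpos by (auto simp: N_def)
    have "sigma_l p y0 h (n-1) = sigma_l p y0 h N + (\<Sum>i=N+1..n-1. h * q i)"
      unfolding sl split by (subst sum.union_disjoint) auto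
    moreover have "(\<Sum>i=N+1..n-1. h * q i) \<ge> (\<Sum>i=N+1..n-1. h * c)"
      using qge hpos by (intro sum_mono) auto
    moreover have "(\<Sum>i=N+1..n-1. h * c) = real (j - 1) * h * c"
      using NN jpos by (simp add: N_def)
    ultimately have t2: "sigma_l p y0 h N \<le> b - real (j-1) * h * c" using nprev by linarith
    have "real (j - 1) * c \<ge> P0 / 2"
    proof -
      have "real (j-1) \<ge> 1 + P0/(2*c)" using j jpos by (simp add: of_nat_diff)
      then have "real (j-1) * c \<ge> (1 + P0/(2*c)) * c" using c by (simp add: mult_right_mono)
      also have "(1 + P0/(2*c)) * c = c + P0/2" using c by (simp add: field_simps)
      finally show ?thesis using c by linarith
    qed
    then have "h * (real (j-1) * c) \<ge> h * (P0/2)" using hpos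
      by (intro mult_left_mono) auto
    then have "real (j-1) * h * c \<ge> h/2 * P0" by (simp add: algebra_simps)
    then show ?thesis using t1 t2 by linarith
  qed
  show ?thesis
    using jpos ex main by (intro exI[of _ j]) (auto simp: p_def h_def n_def)
qed

end
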